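(* Let $N\ge K$ be positive integers and let $F,G\in\mathbb C^{N\times K}$ with $\mathrm{rank}(F)=K$. Then the map $h_{0,F,G}:\mathcal H_K^+\to\mathcal H_K^+$ defined in the context is non-decreasing for the Loewner order: if $Z\le Z'$ in $\mathcal H_K^+$ then $h_{0,F,G}(Z)\le h_{0,F,G}(Z')$.
   Context: $\mathcal H_K^+$ is the cone of $K\times K$ Hermitian positive semidefinite matrices, ordered by $A\le B$ iff $B-A\in\mathcal H_K^+$. $\Pi_F^\perp:=I-F(F^*F)^{-1}F^*$. For $Z\in\mathcal H_K^+$ with positive semidefinite square root $Z^{1/2}$, $$h_{0,F,G}(Z):=G^*F(F^*F)^{-1}Z^{1/2}\big(I+Z^{1/2}(F^*F)^{-1}Z^{1/2}\big)^{-1}Z^{1/2}(F^*F)^{-1}F^*G+G^*\Pi_F^\perp G.$$ For invertible $Z$ this equals $G^*(I+FZ^{-1}F^* )^{-1}G$. *)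

theory Defs
  imports "HOL-Analysis.Analysis"
begin

text \<open>Complex matrices are modelled as complex^'c^'r (rows indexed by 'r, columns by 'c).\<close>

definition cadjoint :: "complex^'c^'r \<Rightarrow> complex^'r^'c" where
  "cadjoint A = (\<chi> i j. cnj (A $ j $ i))"

definition hermitian :: "complex^'n^'n \<Rightarrow> bool" where
  "hermitian A \<longleftrightarrow> cadjoint A = A"

definition psd :: "complex^'n^'n \<Rightarrow> bool" where
  "psd A \<longleftrightarrow> hermitian A \<and> (\<forall>x::complex^'n. 0 \<le> Re (\<Sum>i\<in>UNIV. cnj (x $ i) * (A *v x) $ i))"

definition loewner_le :: "complex^'n^'n \<Rightarrow> complex^'n^'n \<Rightarrow> bool" where
  "loewner_le A B \<longleftrightarrow> psd (B - A)"

definition psd_sqrt :: "complex^'n^'n \<Rightarrow> complex^'n^'n" where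
  "psd_sqrt Z = (THE R. psd R \<and> R ** R = Z)"

definition proj_perp :: "complex^'k^'n \<Rightarrow> complex^'n^'n" where
  "proj_perp F = mat 1 - F ** matrix_inv (cadjoint F ** F) ** cadjoint F"

definition h0 :: "complex^'k^'n \<Rightarrow> complex^'k^'n \<Rightarrow> complex^'k^'k \<Rightarrow> complex^'k^'k" where
  "h0 F G Z =
     (let W = matrix_inv (cadjoint F ** F); S = psd_sqrt Z in
      cadjoint G ** F ** W ** S ** matrix_inv (mat 1 + S ** W ** S) ** S ** W ** cadjoint F ** G
      + cadjoint G ** proj_perp F ** G)"

end

theory Submission
  imports Defs
begin

definition cinner :: "complex^'n \<Rightarrow> complex^'n \<Rightarrow> complex" where
  "cinner x y = (\<Sum>i\<in>UNIV. cnj (x $ i) * y $ i)"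

lemma psd_iff: "psd A \<longleftrightarrow> hermitian A \<and> (\<forall>x. 0 \<le> Re (cinner x (A *v x)))"
  by (simp add: psd_def cinner_def)

lemma cinner_adj: "cinner x (A *v y) = cinner (cadjoint A *v x) y"
proof -
  have "cinner x (A *v y) = (\<Sum>i\<in>UNIV. \<Sum>j\<in>UNIV. cnj (x$i) * A$i$j * y$j)"
    by (simp add: cinner_def matrix_vector_mult_def sum_distrib_left mult.assoc)
  also have "\<dots> = (\<Sum>j\<in>UNIV. \<Sum>i\<in>UNIV. cnj (x$i) * A$i$j * y$j)" by (rule sum.swap)
  also have "\<dots> = cinner (cadjoint A *v x) y"
    by (simp add: cinner_def matrix_vector_mult_def cadjoint_def sum_distrib_right sum_distrib_left mult_ac)
  finally show ?thesis .
qed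

lemma cadjoint_cadjoint[simp]: "cadjoint (cadjoint A) = A"
  by (simp add: cadjoint_def vec_eq_iff)

lemma cadjoint_mult: "cadjoint (A ** B) = cadjoint B ** cadjoint A"
  by (simp add: cadjoint_def vec_eq_iff matrix_matrix_mult_def mult.commute)

lemma cadjoint_add: "cadjoint (A + B) = cadjoint A + cadjoint B"
  by (simp add: cadjoint_def vec_eq_iff)

lemma cadjoint_diff: "cadjoint (A - B) = cadjoint A - cadjoint B"
  by (simp add: cadjoint_def vec_eq_iff)

lemma cadjoint_mat1[simp]: "cadjoint (mat 1) = mat 1"
  by (simp add: cadjoint_def vec_eq_iff mat_def)

lemma matrix_inv_unique:
  fixes A B :: "complex^'n^'n"
  assumes "A ** B = mat 1"
  shows "matrix_inv A = B"
proof -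
  have ex: "\<exists>A'. A ** A' = mat 1 \<and> A' ** A = mat 1"
    using assms matrix_left_right_inverse by blast
  define C where "C = matrix_inv A"
  have C: "A ** C = mat 1 \<and> C ** A = mat 1"
    unfolding C_def matrix_inv_def by (rule someI_ex[OF ex])
  have "C = C ** (A ** B)" using assms by simp
  also have "\<dots> = (C ** A) ** B" by (simp add: matrix_mul_assoc)
  also have "\<dots> = B" using C by simp
  finally show ?thesis unfolding C_def .
qed

lemma matrix_inv_props:
  fixes A :: "complex^'n^'n"
  assumes "invertible A"
  shows "A ** matrix_inv A = mat 1" "matrix_inv A ** A = mat 1"
proof -
  have ex: "\<exists>A'. A ** A' = mat 1 \<and> A' ** A = mat 1"
    using assms invertible_def by blast
  show "A ** matrix_inv A = mat 1" "matrix_inv A ** A = mat 1"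
    unfolding matrix_inv_def using someI_ex[OF ex] by auto
qed

lemma cadjoint_inv:
  fixes A :: "complex^'n^'n"
  assumes "invertible A"
  shows "cadjoint (matrix_inv A) = matrix_inv (cadjoint A)"
proof -
  have "cadjoint A ** cadjoint (matrix_inv A) = mat 1"
    using matrix_inv_props(2)[OF assms] by (metis cadjoint_mult cadjoint_mat1)
  then show ?thesis by (simp add: matrix_inv_unique)
qed

lemma invertible_of_ker:
  fixes A :: "complex^'n^'n"
  assumes "\<And>x. A *v x = 0 \<Longrightarrow> x = 0"
  shows "invertible A"
  using assms invertible_left_inverse matrix_left_invertible_ker by blast

lemma cinner_add_right: "cinner x (y + z) = cinner x y + cinner x z"
  by (simp add: cinner_def distrib_left sum.distrib)
lemma cinner_diff_right: "cinner x (y - z) = cinner x y - cinner x z"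
  by (simp add: cinner_def right_diff_distrib sum_subtractf)
lemma cinner_add_left: "cinner (x + y) z = cinner x z + cinner y z"
  by (simp add: cinner_def distrib_right sum.distrib)
lemma cinner_diff_left: "cinner (x - y) z = cinner x z - cinner y z"
  by (simp add: cinner_def left_diff_distrib sum_subtractf)
lemma cinner_scale_right: "cinner x (c *s y) = c * cinner x y"
  by (simp add: cinner_def sum_distrib_left mult_ac)
lemma cinner_scale_left: "cinner (c *s x) y = cnj c * cinner x y"
  by (simp add: cinner_def sum_distrib_left mult_ac)
lemma cinner_zero_right[simp]: "cinner x 0 = 0"
  by (simp add: cinner_def)
lemma cinner_zero_left[simp]: "cinner 0 x = 0"
  by (simp add: cinner_def)
lemma cinner_sum_right: "finite S \<Longrightarrow> cinner x (sum f S) = (\<Sum>v\<in>S. cinner x (f v))"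
  by (simp add: cinner_def sum_distrib_left sum_component sum.swap[of _ UNIV S])
lemma cinner_sum_left: "finite S \<Longrightarrow> cinner (sum f S) y = (\<Sum>v\<in>S. cinner (f v) y)"
  by (simp add: cinner_def sum_distrib_right sum_component sum.swap[of _ UNIV S])
lemma cinner_cnj: "cnj (cinner x y) = cinner y x"
  by (simp add: cinner_def mult.commute)
lemma re_cinner: "Re (cinner x y) = inner x y"
  by (simp add: cinner_def inner_vec_def inner_complex_def)
lemma cinner_self: "cinner x x = complex_of_real ((norm x)^2)"
proof -
  have "Im (cinner x x) = 0" by (simp add: cinner_def)
  moreover have "Re (cinner x x) = (norm x)^2" by (simp add: re_cinner power2_norm_eq_inner)
  ultimately show ?thesis by (simp add: complex_eq_iff)
qed
lemma cinner_self_eq_0: "cinner x x = 0 \<longleftrightarrow> x = 0"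
  by (simp add: cinner_self)

lemma hermitian_cinner:
  assumes "hermitian A"
  shows "cinner x (A *v y) = cinner (A *v x) y"
  using assms cinner_adj hermitian_def by metis

lemma hermitian_quad_real:
  assumes "hermitian A"
  shows "complex_of_real (Re (cinner x (A *v x))) = cinner x (A *v x)"
proof -
  have "cnj (cinner x (A *v x)) = cinner x (A *v x)"
    by (metis assms cinner_cnj hermitian_cinner)
  then show ?thesis by (metis Reals_cnj_iff complex_is_Real_iff of_real_Re)
qed

lemma matrix_add_rdistrib: "(A + B) ** C = A ** C + B ** (C :: 'a::semiring_1^_^_)"
  by (vector matrix_matrix_mult_def sum.distrib[symmetric] field_simps)
lemma matrix_diff_rdistrib: "(A - B) ** C = A ** C - B ** (C :: 'a::ring_1^_^_)"
  by (vector matrix_matrix_mult_def sum_subtractf[symmetric] field_simps)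
lemma matrix_diff_ldistrib: "(C :: 'a::ring_1^_^_) ** (A - B) = C ** A - C ** B"
  by (vector matrix_matrix_mult_def sum_subtractf[symmetric] field_simps)

lemma psd_add: "psd A \<Longrightarrow> psd B \<Longrightarrow> psd (A + B)"
  by (simp add: psd_iff hermitian_def cadjoint_add matrix_vector_mult_add_rdistrib cinner_add_right)

lemma psd_zero: "psd (0::complex^'n^'n)"
  by (simp add: psd_iff hermitian_def cadjoint_def vec_eq_iff)

lemma psd_inv_antitone:
  fixes P Q :: "complex^'n^'n"
  assumes P: "psd P" and Q: "psd Q" and iP: "invertible P" and iQ: "invertible Q"
    and PQ: "psd (Q - P)"
  shows "psd (matrix_inv P - matrix_inv Q)"
proof -
  have hP: "hermitian P" and hQ: "hermitian Q" using P Q psd_iff by auto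
  have herm: "hermitian (matrix_inv P - matrix_inv Q)"
    using hP hQ by (simp add: hermitian_def cadjoint_diff cadjoint_inv iP iQ)
  have "0 \<le> Re (cinner x ((matrix_inv P - matrix_inv Q) *v x))" for x
  proof -
    define y where "y = matrix_inv Q *v x"
    define z where "z = matrix_inv P *v x"
    have xQ: "Q *v y = x" unfolding y_def by (simp add: matrix_vector_mul_assoc matrix_inv_props[OF iQ])
    have xP: "P *v z = x" unfolding z_def by (simp add: matrix_vector_mul_assoc matrix_inv_props[OF iP])
    have 1: "0 \<le> Re (cinner (y - z) (P *v (y - z)))" using P psd_iff by blast
    have 2: "0 \<le> Re (cinner y ((Q - P) *v y))" using PQ psd_iff by blast
    have e1: "cinner (y - z) (P *v (y - z)) = cinner y (P *v y) - cinner y x - cinner z (P *v y) + cinner z x"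
      by (simp add: matrix_vector_mult_diff_distrib cinner_diff_left cinner_diff_right xP)
    have e2: "cinner z (P *v y) = cinner x y" using hermitian_cinner[OF hP] xP by metis
    have e3: "Re (cinner x y) = Re (cinner y x)" by (subst cinner_cnj[symmetric]) simp
    have e3': "Re (cinner x z) = Re (cinner z x)" by (subst cinner_cnj[symmetric]) simp
    have e4: "cinner y ((Q - P) *v y) = cinner y x - cinner y (P *v y)"
      by (simp add: matrix_vector_mult_diff_rdistrib cinner_diff_right xQ)
    have e5: "cinner x ((matrix_inv P - matrix_inv Q) *v x) = cinner x z - cinner x y"
      by (simp add: matrix_vector_mult_diff_rdistrib cinner_diff_right y_def z_def)
    show ?thesis using 1 2 e1 e2 e3 e3' e4 e5 by simp
  qed
  then show ?thesis using herm psd_iff by blast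
qed

lemma psd_congr:
  fixes X :: "complex^'n^'n" and B :: "complex^'m^'n"
  assumes "psd X" shows "psd (cadjoint B ** X ** B)"
proof -
  have h: "hermitian (cadjoint B ** X ** B)" using assms
    by (simp add: psd_iff hermitian_def cadjoint_mult matrix_mul_assoc)
  have e: "cinner x ((cadjoint B ** X ** B) *v x) = cinner (B *v x) (X *v (B *v x))" for x
    by (simp only: matrix_vector_mul_assoc[symmetric]) (subst cinner_adj, simp)
  show ?thesis using h e assms psd_iff by metis
qed

lemma rank_full_inj:
  fixes F :: "complex^'k^'n"
  assumes "rank F = CARD('k)" and "F *v x = 0"
  shows "x = 0"
proof -
  have "vec.span (rows F) = UNIV"
    using assms(1) vec.dim_eq_full[of "rows F"]
    by (simp add: row_rank_def_gen vec.dimension_def card_cart_basis)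
  then have "\<exists>B. B ** F = mat 1" using matrix_left_invertible_span_rows_gen by blast
  then show ?thesis using matrix_left_invertible_ker assms(2) by blast
qed

lemma re_cinner_self: "Re (cinner x x) = (norm x)^2"
  by (simp add: re_cinner power2_norm_eq_inner)

lemma gram_quad:
  fixes F :: "complex^'k^'n"
  shows "cinner x ((cadjoint F ** F) *v x) = cinner (F *v x) (F *v x)"
  by (simp only: matrix_vector_mul_assoc[symmetric]) (subst cinner_adj, simp)

lemma gram_psd: "psd (cadjoint F ** F)"
  unfolding psd_iff hermitian_def gram_quad
  by (simp add: cadjoint_mult cinner_self)

lemma gram_plus_invertible:
  fixes F :: "complex^'k^'n" and Z :: "complex^'k^'k"
  assumes "rank F = CARD('k)" and "psd Z"
  shows "invertible (cadjoint F ** F + Z)"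
proof (rule invertible_of_ker)
  fix x assume "(cadjoint F ** F + Z) *v x = 0"
  then have "Re (cinner x ((cadjoint F ** F + Z) *v x)) = 0" by simp
  then have "(norm (F *v x))^2 + Re (cinner x (Z *v x)) = 0"
    by (simp add: matrix_vector_mult_add_rdistrib cinner_add_right gram_quad re_cinner_self)
  moreover have "0 \<le> Re (cinner x (Z *v x))" using assms(2) psd_iff by blast
  ultimately have "F *v x = 0"
    by (smt (verit, best) norm_eq_zero zero_le_power2 power_zero_numeral zero_less_power2) 
  then show "x = 0" using rank_full_inj assms(1) by blast
qed

lemma inv_psd:
  fixes M :: "complex^'n^'n"
  assumes "psd M" "invertible M"
  shows "psd (matrix_inv M)"
proof -
  have h: "hermitian (matrix_inv M)"
    using assms by (simp add: psd_iff hermitian_def cadjoint_inv)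
  have "0 \<le> Re (cinner y (matrix_inv M *v y))" for y
  proof -
    define u where "u = matrix_inv M *v y"
    have "M *v u = y" unfolding u_def by (simp add: matrix_vector_mul_assoc matrix_inv_props[OF assms(2)])
    then have "cinner y (matrix_inv M *v y) = cinner u (M *v u)"
      using hermitian_cinner[of M u u] assms(1) psd_iff u_def by metis
    moreover have "0 \<le> Re (cinner u (M *v u))" using assms(1) psd_iff by blast
    ultimately show ?thesis by simp
  qed
  then show ?thesis using h psd_iff by blast
qed

lemma T_invertible:
  fixes S W :: "complex^'n^'n"
  assumes "hermitian S" "psd W"
  shows "invertible (mat 1 + S ** W ** S)"
proof (rule invertible_of_ker)
  fix x assume "(mat 1 + S ** W ** S) *v x = 0"
  then have "Re (cinner x ((mat 1 + S ** W ** S) *v x)) = 0" by simp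
  moreover have "cinner x ((S ** W ** S) *v x) = cinner (S *v x) (W *v (S *v x))"
    using hermitian_cinner[OF assms(1)] by (simp add: matrix_vector_mul_assoc[symmetric])
  ultimately have "(norm x)^2 + Re (cinner (S *v x) (W *v (S *v x))) = 0"
    by (simp add: matrix_vector_mult_add_rdistrib cinner_add_right re_cinner_self)
  moreover have "0 \<le> Re (cinner (S *v x) (W *v (S *v x)))" using assms(2) psd_iff by blast
  ultimately show "x = 0"
    by (smt (verit, best) norm_eq_zero zero_le_power2 power_zero_numeral zero_less_power2)
qed

lemma main_identity:
  fixes M Z S W :: "complex^'k^'k"
  assumes iN: "invertible (M + Z)" and iT: "invertible (mat 1 + S ** W ** S)"
    and MW: "M ** W = mat 1" and SS: "S ** S = Z"
  shows "W ** S ** matrix_inv (mat 1 + S ** W ** S) ** S ** W = W - matrix_inv (M + Z)"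
proof -
  define T where "T = mat 1 + S ** W ** S"
  define Ti where "Ti = matrix_inv T"
  define N where "N = M + Z"
  define Ni where "Ni = matrix_inv N"
  have TTi: "T ** Ti = mat 1" unfolding Ti_def T_def using matrix_inv_props[OF iT] by simp
  have NNi: "N ** Ni = mat 1" "Ni ** N = mat 1" unfolding Ni_def N_def using matrix_inv_props[OF iN] by simp_all
  have NX: "N ** (W ** S ** Ti ** S ** W) = (S + Z ** W ** S) ** Ti ** S ** W"
    unfolding N_def by (simp add: matrix_add_rdistrib matrix_mul_assoc MW)
  have ST: "S ** T = S + Z ** W ** S"
    unfolding T_def by (simp add: matrix_add_ldistrib matrix_mul_assoc SS)
  have "N ** (W ** S ** Ti ** S ** W) = S ** (T ** Ti) ** S ** W"
    unfolding NX ST[symmetric] by (simp add: matrix_mul_assoc)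
  also have "\<dots> = Z ** W" by (simp add: TTi SS)
  finally have a: "N ** (W ** S ** Ti ** S ** W) = Z ** W" .
  have b: "N ** (W - Ni) = Z ** W"
    unfolding N_def matrix_diff_ldistrib using NNi(1) unfolding N_def
    by (simp add: matrix_add_rdistrib MW)
  have "W ** S ** Ti ** S ** W = Ni ** (N ** (W ** S ** Ti ** S ** W))"
    by (simp add: matrix_mul_assoc NNi)
  also have "\<dots> = Ni ** (N ** (W - Ni))" using a b by simp
  also have "\<dots> = W - Ni" by (simp add: matrix_mul_assoc NNi)
  finally show ?thesis unfolding T_def Ti_def N_def Ni_def .
qed

lemma cinner_scaleR_right: "cinner x (c *\<^sub>R y) = complex_of_real c * cinner x y"
  unfolding cinner_def vector_scaleR_component by (simp add: sum_distrib_left scaleR_conv_of_real mult_ac)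

lemma cinner_scaleR_left: "cinner (c *\<^sub>R x) y = complex_of_real c * cinner x y"
  unfolding cinner_def vector_scaleR_component by (simp add: sum_distrib_left scaleR_conv_of_real mult_ac)

lemma ofreal_scale: "complex_of_real c *s (x::complex^'n) = c *\<^sub>R x"
  unfolding vec_eq_iff vector_scaleR_component by (simp add: scaleR_conv_of_real)

lemma cinner_continuous: "continuous_on UNIV (\<lambda>y. cinner v y)"
  unfolding cinner_def by (intro continuous_intros)

lemma mv_scaleR: "(A::complex^'n^'m) *v (c *\<^sub>R x) = c *\<^sub>R (A *v x)"
  using linear_cmul[OF matrix_vector_mul_linear] by blast

lemma mv_scale: "(A::complex^'n^'m) *v (c *s x) = c *s (A *v x)"
  by (simp add: vec_eq_iff matrix_vector_mult_def sum_distrib_left mult_ac)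

lemma real_quad_aux:
  fixes a C :: real
  assumes "\<And>t. t > 0 \<Longrightarrow> 2 * t * a + t^2 * C \<le> 0"
  shows "a \<le> 0"
proof (rule ccontr)
  assume "\<not> a \<le> 0" then have a: "a > 0" by simp
  define t where "t = a / (\<bar>C\<bar> + 1)"
  have t: "t > 0" unfolding t_def using a by simp
  have "t * \<bar>C\<bar> \<le> a" unfolding t_def using a
    by (simp add: field_simps)
  then have "t * t * \<bar>C\<bar> \<le> t * a" using t by (metis mult.assoc mult_left_mono less_imp_le)
  moreover have "- (t * t * \<bar>C\<bar>) \<le> t^2 * C" 
  proof -
    have "t^2 * (-\<bar>C\<bar>) \<le> t^2 * C" by (rule mult_left_mono) auto
    then show ?thesis by (simp add: power2_eq_square)
  qed
  moreover have "0 < t * a" using t a by simp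
  ultimately have "0 < 2 * t * a + t^2 * C" by linarith
  then show False using assms[OF t] by linarith
qed

lemma eigen_exists:
  fixes Z :: "complex^'n^'n" and B :: "(complex^'n) set"
  assumes hZ: "hermitian Z"
    and inv: "\<And>v y. v \<in> B \<Longrightarrow> cinner v y = 0 \<Longrightarrow> cinner v (Z *v y) = 0"
    and r: "r \<noteq> 0" "\<And>v. v \<in> B \<Longrightarrow> cinner v r = 0"
  shows "\<exists>u. (\<forall>v\<in>B. cinner v u = 0) \<and> cinner u u = 1 \<and> (\<exists>l. Z *v u = l *s u)"
proof -
  define P where "P = {y. \<forall>v. v \<in> B \<longrightarrow> cinner v y = 0}"
  define f where "f = (\<lambda>y. inner y (Z *v y))"
  have closedP: "closed P" unfolding P_def
  proof (rule closed_Collect_all)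
    fix v
    show "closed {y. v \<in> B \<longrightarrow> cinner v y = 0}"
    proof (cases "v \<in> B")
      case True
      then show ?thesis using closed_Collect_eq[OF cinner_continuous[of v] continuous_on_const] by simp
    next
      case False
      then show ?thesis by simp
    qed
  qed
  define K where "K = P \<inter> sphere 0 1"
  have cK: "compact K" unfolding K_def using closedP by (simp add: closed_Int_compact)
  have P_scale: "c *\<^sub>R y \<in> P" if "y \<in> P" for c y using that by (simp add: P_def cinner_scaleR_right)
  have P_add: "y + z \<in> P" if "y \<in> P" "z \<in> P" for y z using that by (simp add: P_def cinner_add_right)
  have P_diff: "y - z \<in> P" if "y \<in> P" "z \<in> P" for y z using that by (simp add: P_def cinner_diff_right)
  have P_Z: "Z *v y \<in> P" if "y \<in> P" for y using that inv by (simp add: P_def)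
  have rP: "r \<in> P" using r by (simp add: P_def)
  have "(1 / norm r) *\<^sub>R r \<in> K" unfolding K_def using P_scale[OF rP] r by simp
  then have neK: "K \<noteq> {}" by blast
  have cf: "continuous_on K f" unfolding f_def
    by (intro continuous_intros matrix_vector_mult_linear_continuous_on)
  obtain u where uK: "u \<in> K" and umax: "\<And>y. y \<in> K \<Longrightarrow> f y \<le> f u"
    using continuous_attains_sup[OF cK neK cf] by blast
  define lam where "lam = f u"
  have uP: "u \<in> P" and nu: "norm u = 1" using uK by (auto simp: K_def)
  have f_scale: "f (c *\<^sub>R y) = c^2 * f y" for c y
    by (simp add: f_def mv_scaleR power2_eq_square)
  have fle: "f y \<le> lam * (norm y)^2" if "y \<in> P" for y
  proof (cases "y = 0")
    case True then show ?thesis by (simp add: f_def)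
  next
    case False
    then have "(1 / norm y) *\<^sub>R y \<in> K" unfolding K_def using P_scale[OF that] by simp
    then have "f ((1 / norm y) *\<^sub>R y) \<le> lam" using umax lam_def by blast
    then have "f y / (norm y)^2 \<le> lam" using f_scale by (simp add: power_divide)
    then show ?thesis using False by (simp add: field_simps)
  qed
  define d where "d = Z *v u - lam *\<^sub>R u"
  have dP: "d \<in> P" unfolding d_def using P_diff[OF P_Z[OF uP] P_scale[OF uP]] .
  have herm_re: "inner a (Z *v b) = inner (Z *v a) b" for a b
    using hermitian_cinner[OF hZ, of a b] re_cinner by metis
  have "2 * t * (norm d)^2 + t^2 * (f d - lam * (norm d)^2) \<le> 0" if "t > 0" for t
  proof -
    have "f (u + t *\<^sub>R d) \<le> lam * (norm (u + t *\<^sub>R d))^2"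
      using fle P_add[OF uP P_scale[OF dP]] by blast
    moreover have "f (u + t *\<^sub>R d) = lam + 2 * t * inner d (Z *v u) + t^2 * f d"
    proof -
      have e1: "Z *v (u + t *\<^sub>R d) = Z *v u + t *\<^sub>R (Z *v d)"
        by (simp add: matrix_vector_right_distrib mv_scaleR)
      have "f (u + t *\<^sub>R d) = inner u (Z *v u) + t * inner u (Z *v d) + t * inner d (Z *v u) + t * t * inner d (Z *v d)"
        unfolding f_def e1 by (simp add: inner_add_left inner_add_right ring_distribs)
      moreover have "inner u (Z *v d) = inner d (Z *v u)"
        using herm_re[of u d] inner_commute[of "Z *v u" d] by simp
      ultimately show ?thesis by (simp add: f_def lam_def power2_eq_square)
    qed
    moreover have "(norm (u + t *\<^sub>R d))^2 = 1 + 2 * t * inner d u + t^2 * (norm d)^2"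
    proof -
      have "(norm (u + t *\<^sub>R d))^2 = inner u u + t * inner u d + t * inner d u + t * t * inner d d"
        unfolding power2_norm_eq_inner by (simp add: inner_add_left inner_add_right ring_distribs)
      moreover have "inner u d = inner d u" by (rule inner_commute)
      moreover have "inner u u = 1" using nu by (simp add: power2_norm_eq_inner[symmetric])
      moreover have "inner d d = (norm d)^2" by (simp add: power2_norm_eq_inner)
      ultimately show ?thesis by (simp add: power2_eq_square)
    qed
    moreover have "inner d (Z *v u) - lam * inner d u = (norm d)^2"
      by (simp add: power2_norm_eq_inner d_def inner_diff_right)
    ultimately show ?thesis by (simp add: algebra_simps)
  qed
  then have "(norm d)^2 \<le> 0" by (rule real_quad_aux)
  then have "d = 0" by simp
  then have "Z *v u = complex_of_real lam *s u" unfolding d_def ofreal_scale by simp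
  moreover have "cinner u u = 1" using nu by (simp add: cinner_self)
  moreover have "\<forall>v\<in>B. cinner v u = 0" using uP by (simp add: P_def)
  ultimately show ?thesis by blast
qed

definition onb_eig :: "complex^'n^'n \<Rightarrow> (complex^'n) set \<Rightarrow> bool" where
  "onb_eig Z B \<longleftrightarrow> finite B \<and> (\<forall>v\<in>B. cinner v v = 1) \<and> (\<forall>u\<in>B. \<forall>v\<in>B. u \<noteq> v \<longrightarrow> cinner u v = 0)
     \<and> (\<forall>v\<in>B. \<exists>l. Z *v v = l *s v)"

lemma onb_card:
  assumes "onb_eig Z (B :: (complex^'n) set)"
  shows "card B \<le> DIM(complex^'n)"
proof -
  have "pairwise orthogonal B" using assms
    unfolding pairwise_def orthogonal_def onb_eig_def by (metis re_cinner zero_complex.sel(1))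
  moreover have "0 \<notin> B" using assms unfolding onb_eig_def by force
  ultimately have "independent B" by (rule pairwise_orthogonal_independent)
  then show ?thesis using independent_bound by blast
qed

lemma onb_coeff:
  assumes "finite B" "\<forall>v\<in>B. cinner v v = 1" "\<forall>u\<in>B. \<forall>v\<in>B. u \<noteq> v \<longrightarrow> cinner u v = 0" "w \<in> B"
  shows "cinner w (\<Sum>v\<in>B. c v *s v) = c w"
proof -
  have "cinner w (\<Sum>v\<in>B. c v *s v) = (\<Sum>v\<in>B. c v * cinner w v)"
    using assms(1) by (simp add: cinner_sum_right cinner_scale_right)
  also have "\<dots> = (\<Sum>v\<in>B. if v = w then c v else 0)"
  proof (rule sum.cong[OF refl])
    fix v assume "v \<in> B"
    then show "c v * cinner w v = (if v = w then c v else 0)"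
      using assms(2,3,4) by (cases "v = w") simp_all
  qed
  also have "\<dots> = c w" using assms(1,4) by simp
  finally show ?thesis .
qed

lemma spectral:
  fixes Z :: "complex^'n^'n"
  assumes hZ: "hermitian Z"
  shows "\<exists>B. onb_eig Z B \<and> (\<forall>x. x = (\<Sum>v\<in>B. cinner v x *s v))"
proof -
  have "onb_eig Z {}" by (simp add: onb_eig_def)
  moreover have "\<forall>B. onb_eig Z B \<longrightarrow> card B < DIM(complex^'n) + 1"
  proof (intro allI impI)
    fix B' assume "onb_eig Z B'"
    then have "card B' \<le> DIM(complex^'n)" by (rule onb_card)
    then show "card B' < DIM(complex^'n) + 1" by simp
  qed
  ultimately have "\<exists>B. onb_eig Z B \<and> (\<forall>B'. onb_eig Z B' \<longrightarrow> card B' \<le> card B)"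
    by (rule ex_has_greatest_nat[where f=card])
  then obtain B where B: "onb_eig Z B" and Bmax: "\<And>B'. onb_eig Z B' \<Longrightarrow> card B' \<le> card B"
    by blast
  have fin: "finite B" and unit: "\<forall>v\<in>B. cinner v v = 1"
    and orth: "\<forall>u\<in>B. \<forall>v\<in>B. u \<noteq> v \<longrightarrow> cinner u v = 0" and eig: "\<forall>v\<in>B. \<exists>l. Z *v v = l *s v"
    using B unfolding onb_eig_def by auto
  have "x = (\<Sum>v\<in>B. cinner v x *s v)" for x
  proof (rule ccontr)
    assume ne: "x \<noteq> (\<Sum>v\<in>B. cinner v x *s v)"
    define r where "r = x - (\<Sum>v\<in>B. cinner v x *s v)"
    have r0: "r \<noteq> 0" using ne unfolding r_def by simp
    have rB: "cinner w r = 0" if "w \<in> B" for w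
      unfolding r_def cinner_diff_right using onb_coeff[OF fin unit orth that] by simp
    have inv: "cinner v (Z *v y) = 0" if vB: "v \<in> B" and vy: "cinner v y = 0" for v y
    proof -
      obtain l where l: "Z *v v = l *s v" using eig vB by blast
      have "cinner v (Z *v y) = cinner (Z *v v) y" by (rule hermitian_cinner[OF hZ])
      also have "\<dots> = cnj l * cinner v y" by (simp add: l cinner_scale_left)
      finally show ?thesis using vy by simp
    qed
    obtain u where u1: "\<forall>v\<in>B. cinner v u = 0" and u2: "cinner u u = 1" and u3: "\<exists>l. Z *v u = l *s u"
      using eigen_exists[OF hZ inv r0 rB] by blast
    have uB: "u \<notin> B"
    proof
      assume "u \<in> B" then have "cinner u u = 0" using u1 by blast
      then show False using u2 by simp
    qed
    have "onb_eig Z (insert u B)"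
      unfolding onb_eig_def
    proof (intro conjI ballI impI)
      show "finite (insert u B)" using fin by simp
      show "cinner v v = 1" if "v \<in> insert u B" for v
      proof (cases "v = u")
        case True then show ?thesis using u2 by simp
      next
        case False then show ?thesis using that unit by simp
      qed
      show "\<exists>l. Z *v v = l *s v" if "v \<in> insert u B" for v
      proof (cases "v = u")
        case True then show ?thesis using u3 by simp
      next
        case False then show ?thesis using that eig by simp
      qed
      have ub: "cinner u b = 0" if "b \<in> B" for b
      proof -
        have "cinner b u = 0" using u1 that by blast
        then have "cnj (cinner b u) = 0" by simp
        then show ?thesis by (simp only: cinner_cnj)
      qed
      show "cinner a b = 0" if "a \<in> insert u B" "b \<in> insert u B" "a \<noteq> b" for a b
      proof (cases "a = u")
        case True
        then have "b \<in> B" using that by simp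
        then show ?thesis using ub True by simp
      next
        case False
        then have aB: "a \<in> B" using that by simp
        show ?thesis
        proof (cases "b = u")
          case True then show ?thesis using u1 aB by simp
        next
          case False then have "b \<in> B" using that by simp
          then show ?thesis using orth aB that(3) by simp
        qed
      qed
    qed
    then have "card (insert u B) \<le> card B" by (rule Bmax)
    then show False using uB fin by simp
  qed
  then show ?thesis using B by blast
qed

lemma hermitian_outer_sum:
  fixes B :: "(complex^'n) set" and s :: "complex^'n \<Rightarrow> complex"
  assumes "\<And>v. cnj (s v) = s v"
  shows "hermitian ((\<chi> i j. \<Sum>v\<in>B. s v * v$i * cnj (v$j)) :: complex^'n^'n)"
proof -
  define S where "S = ((\<chi> i j. \<Sum>v\<in>B. s v * v$i * cnj (v$j)) :: complex^'n^'n)"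
  have "cadjoint S $ i $ j = S $ i $ j" for i j
  proof -
    have "cadjoint S $ i $ j = (\<Sum>v\<in>B. cnj (s v * v$j * cnj (v$i)))"
      unfolding cadjoint_def S_def by simp
    also have "\<dots> = S $ i $ j" unfolding S_def
      by (simp add: assms(1) mult.commute mult.left_commute)
    finally show ?thesis .
  qed
  then show ?thesis unfolding hermitian_def S_def[symmetric] by (simp add: vec_eq_iff)
qed

lemma sqrt_exists_unique:
  fixes Z :: "complex^'n^'n"
  assumes pZ: "psd Z"
  shows "\<exists>S. psd S \<and> S ** S = Z \<and> (\<forall>R. psd R \<and> R ** R = Z \<longrightarrow> R = S)"
proof -
  have hZ: "hermitian Z" using pZ psd_iff by blast
  from spectral[OF hZ] obtain B where BB: "onb_eig Z B \<and> (\<forall>x. x = (\<Sum>v\<in>B. cinner v x *s v))" ..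
  have B: "onb_eig Z B" using BB by (rule conjunct1)
  have expn: "x = (\<Sum>v\<in>B. cinner v x *s v)" for x using conjunct2[OF BB] by (rule spec)
  have fin: "finite B" and unit: "\<forall>v\<in>B. cinner v v = 1"
    and orth: "\<forall>u\<in>B. \<forall>v\<in>B. u \<noteq> v \<longrightarrow> cinner u v = 0" and eig0: "\<forall>v\<in>B. \<exists>l. Z *v v = l *s v"
    using B unfolding onb_eig_def by auto
  define lam where "lam v = Re (cinner v (Z *v v))" for v
  have eig: "Z *v v = complex_of_real (lam v) *s v" if vB: "v \<in> B" for v
  proof -
    obtain l where l: "Z *v v = l *s v" using eig0 vB by blast
    have "cinner v (Z *v v) = l" using unit vB by (simp add: l cinner_scale_right)
    then have "complex_of_real (lam v) = l" unfolding lam_def using hermitian_quad_real[OF hZ, of v] by simp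
    then show ?thesis using l by simp
  qed
  have lam0: "lam v \<ge> 0" for v unfolding lam_def using pZ psd_iff by blast
  define s where "s v = complex_of_real (sqrt (lam v))" for v
  have ss: "s v * s v = complex_of_real (lam v)" for v
    unfolding s_def using lam0[of v] by (simp flip: of_real_mult)
  define S where "S = (\<chi> i j. \<Sum>v\<in>B. s v * v$i * cnj (v$j))"
  have Sv: "S *v x = (\<Sum>v\<in>B. (s v * cinner v x) *s v)" for x
  proof -
    have "(S *v x)$i = (\<Sum>v\<in>B. (s v * cinner v x) * v$i)" for i
    proof -
      have "(S *v x)$i = (\<Sum>j\<in>UNIV. \<Sum>v\<in>B. s v * v$i * cnj (v$j) * x$j)"
        unfolding S_def by (simp add: matrix_vector_mult_def sum_distrib_right)
      also have "\<dots> = (\<Sum>v\<in>B. \<Sum>j\<in>UNIV. s v * v$i * cnj (v$j) * x$j)" by (rule sum.swap)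
      also have "\<dots> = (\<Sum>v\<in>B. (s v * cinner v x) * v$i)"
        by (simp add: cinner_def sum_distrib_left sum_distrib_right mult_ac)
      finally show ?thesis .
    qed
    then show ?thesis by (simp add: vec_eq_iff sum_component)
  qed
  have Zx: "Z *v x = (\<Sum>v\<in>B. (complex_of_real (lam v) * cinner v x) *s v)" for x
  proof -
    have "Z *v x = Z *v (\<Sum>v\<in>B. cinner v x *s v)" by (rule arg_cong[OF expn])
    also have "\<dots> = (\<Sum>v\<in>B. Z *v (cinner v x *s v))"
      by (rule linear_sum[OF matrix_vector_mul_linear])
    also have "\<dots> = (\<Sum>v\<in>B. (complex_of_real (lam v) * cinner v x) *s v)"
      by (intro sum.cong refl) (simp add: mv_scale eig vector_smult_assoc mult.commute)
    finally show ?thesis .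
  qed
  have SS: "S ** S = Z"
  proof -
    have "(S ** S) *v x = Z *v x" for x
    proof -
      have "(S ** S) *v x = S *v (S *v x)" by (simp add: matrix_vector_mul_assoc)
      also have "\<dots> = (\<Sum>v\<in>B. (s v * (s v * cinner v x)) *s v)"
        unfolding Sv[of "S *v x"] by (intro sum.cong refl) (simp add: Sv[of x] onb_coeff[OF fin unit orth])
      also have "\<dots> = Z *v x" unfolding Zx by (intro sum.cong refl) (simp add: ss[symmetric] mult.assoc)
      finally show ?thesis .
    qed
    then show ?thesis by (simp add: matrix_eq)
  qed
  have hS: "hermitian S"
    unfolding S_def by (rule hermitian_outer_sum) (simp add: s_def)
  have qS: "0 \<le> Re (cinner x (S *v x))" for x
  proof -
    have "cinner x (S *v x) = (\<Sum>v\<in>B. s v * cinner v x * cnj (cinner v x))"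
      unfolding Sv using fin by (simp add: cinner_sum_right cinner_scale_right cinner_cnj)
    also have "\<dots> = (\<Sum>v\<in>B. complex_of_real (sqrt (lam v) * ((Re (cinner v x))^2 + (Im (cinner v x))^2)))"
      by (intro sum.cong refl) (simp add: s_def complex_mult_cnj mult.assoc)
    finally have "Re (cinner x (S *v x)) = (\<Sum>v\<in>B. sqrt (lam v) * ((Re (cinner v x))^2 + (Im (cinner v x))^2))"
      by (simp add: Re_sum)
    also have "\<dots> \<ge> 0" by (intro sum_nonneg) (simp add: lam0)
    finally show ?thesis .
  qed
  have pS: "psd S" using hS qS psd_iff by blast
  have uniq: "R = S" if pR: "psd R" and RR: "R ** R = Z" for R
  proof -
    have hR: "hermitian R" using pR psd_iff by blast
    have Rv: "R *v v = s v *s v" if vB: "v \<in> B" for v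
    proof -
      define w where "w = R *v v - s v *s v"
      have RRv: "R *v (R *v v) = complex_of_real (lam v) *s v"
        using eig[OF vB] RR by (simp add: matrix_vector_mul_assoc)
      have Rw: "R *v w = (- s v) *s w"
        unfolding w_def by (simp add: matrix_vector_mult_diff_distrib mv_scale RRv vector_ssub_ldistrib
            vector_smult_assoc ss)
      have "w = 0"
      proof (cases "lam v = 0")
        case True
        then have s0: "s v = 0" by (simp add: s_def)
        then have "R *v w = 0" using Rw by simp
        moreover have wv: "w = R *v v" using s0 by (simp add: w_def)
        ultimately have "cinner w w = 0" using hermitian_cinner[OF hR, of v w] by simp
        then show ?thesis by (simp add: cinner_self_eq_0)
      next
        case False
        then have lp: "sqrt (lam v) > 0" using lam0[of v] by simp
        have "cinner w (R *v w) = - s v * cinner w w" unfolding Rw cinner_scale_right by simp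
        then have "Re (cinner w (R *v w)) = - sqrt (lam v) * (norm w)^2"
          by (simp add: s_def cinner_self)
        moreover have "0 \<le> Re (cinner w (R *v w))" using pR psd_iff by blast
        ultimately have "sqrt (lam v) * (norm w)^2 \<le> 0" by linarith
        then have "(norm w)^2 \<le> 0" using mult_le_0_iff[of "sqrt (lam v)" "(norm w)^2"] lp by auto
        then show ?thesis by simp
      qed
      then show ?thesis unfolding w_def by simp
    qed
    have "R *v x = S *v x" for x
    proof -
      have "R *v x = R *v (\<Sum>v\<in>B. cinner v x *s v)" by (rule arg_cong[OF expn])
      also have "\<dots> = (\<Sum>v\<in>B. R *v (cinner v x *s v))"
        by (rule linear_sum[OF matrix_vector_mul_linear])
      also have "\<dots> = S *v x" unfolding Sv
        by (intro sum.cong refl) (simp add: mv_scale Rv vector_smult_assoc mult.commute)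
      finally show ?thesis .
    qed
    then show ?thesis by (simp add: matrix_eq)
  qed
  show ?thesis using pS SS uniq by blast
qed

lemma psd_sqrt_props:
  fixes Z :: "complex^'n^'n"
  assumes "psd Z"
  shows "psd (psd_sqrt Z) \<and> psd_sqrt Z ** psd_sqrt Z = Z"
proof -
  obtain S where S: "psd S" "S ** S = Z" and u: "\<And>R. psd R \<and> R ** R = Z \<Longrightarrow> R = S"
    using sqrt_exists_unique[OF assms] by blast
  have "psd_sqrt Z = S" unfolding psd_sqrt_def
  proof (rule the_equality)
    show "psd S \<and> S ** S = Z" using S by simp
    fix R assume "psd R \<and> R ** R = Z" then show "R = S" by (rule u)
  qed
  then show ?thesis using S by simp
qed

lemma h0_formula:
  fixes F G :: "complex^'k^'n" and Z :: "complex^'k^'k"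
  assumes r: "rank F = CARD('k)" and Z: "psd Z"
  shows "h0 F G Z = cadjoint (cadjoint F ** G) ** (matrix_inv (cadjoint F ** F) - matrix_inv (cadjoint F ** F + Z)) ** (cadjoint F ** G)
           + cadjoint G ** proj_perp F ** G"
proof -
  define M where "M = cadjoint F ** F"
  define W where "W = matrix_inv M"
  define S where "S = psd_sqrt Z"
  have iM: "invertible M" using gram_plus_invertible[OF r psd_zero] unfolding M_def by simp
  have MW: "M ** W = mat 1" unfolding W_def using matrix_inv_props[OF iM] by simp
  have pW: "psd W" unfolding W_def using inv_psd[OF _ iM] gram_psd M_def by blast
  have S: "psd S" "S ** S = Z" using psd_sqrt_props[OF Z] unfolding S_def by auto
  have hS: "hermitian S" using S psd_iff by blast
  have iT: "invertible (mat 1 + S ** W ** S)" using T_invertible[OF hS pW] .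
  have iN: "invertible (M + Z)" using gram_plus_invertible[OF r Z] unfolding M_def .
  have key: "W ** S ** matrix_inv (mat 1 + S ** W ** S) ** S ** W = W - matrix_inv (M + Z)"
    using main_identity[OF iN iT MW S(2)] .
  have "h0 F G Z = (cadjoint G ** F) ** (W ** S ** matrix_inv (mat 1 + S ** W ** S) ** S ** W) ** (cadjoint F ** G)
           + cadjoint G ** proj_perp F ** G"
    unfolding h0_def Let_def W_def S_def M_def by (simp add: matrix_mul_assoc)
  then show ?thesis unfolding key by (simp add: cadjoint_mult M_def W_def)
qed

theorem lemma3:
  fixes F G :: "complex^'k^'n" and Z Z' :: "complex^'k^'k"
  assumes "CARD('k) \<le> CARD('n)"
    and "rank F = CARD('k)"
    and "psd Z" and "psd Z'"
    and "loewner_le Z Z'"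
  shows "loewner_le (h0 F G Z) (h0 F G Z')"
proof -
  define M where "M = cadjoint F ** F"
  define B where "B = cadjoint F ** G"
  have iN: "invertible (M + Z)" using gram_plus_invertible[OF assms(2) assms(3)] unfolding M_def .
  have iN': "invertible (M + Z')" using gram_plus_invertible[OF assms(2) assms(4)] unfolding M_def .
  have pN: "psd (M + Z)" using psd_add[OF gram_psd assms(3)] unfolding M_def .
  have pN': "psd (M + Z')" using psd_add[OF gram_psd assms(4)] unfolding M_def .
  have d: "(M + Z') - (M + Z) = Z' - Z" by simp
  have pd: "psd (matrix_inv (M + Z) - matrix_inv (M + Z'))"
    using psd_inv_antitone[OF pN pN' iN iN'] assms(5) unfolding loewner_le_def d by blast
  have "h0 F G Z' - h0 F G Z
     = cadjoint B ** (matrix_inv M - matrix_inv (M + Z')) ** B - cadjoint B ** (matrix_inv M - matrix_inv (M + Z)) ** B"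
    unfolding h0_formula[OF assms(2) assms(3)] h0_formula[OF assms(2) assms(4)] M_def B_def by simp
  also have "\<dots> = cadjoint B ** ((matrix_inv M - matrix_inv (M + Z')) - (matrix_inv M - matrix_inv (M + Z))) ** B"
    by (simp add: matrix_diff_ldistrib matrix_diff_rdistrib)
  also have "\<dots> = cadjoint B ** (matrix_inv (M + Z) - matrix_inv (M + Z')) ** B" by simp
  finally show ?thesis unfolding loewner_le_def using psd_congr[OF pd] by simp
qed

end
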